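(* For every $k\ge 0$ let $a(k)$ be the exponent of the largest power of $2$ dividing $k!$. For every $n\ge1$, let $f(n)$ be the minimum of $\Phi(T)$ over all binary phylogenetic trees $T$ with $n$ leaves. Then for every $n\ge 1$, $$f(n)=\sum_{k=0}^{n-1}a(k).$$
   Context: A phylogenetic tree with $n$ leaves is a rooted tree whose leaves are bijectively labeled by $\{1,\dots,n\}$; binary means every internal node has exactly two children. The depth $\delta_T(v)$ is the number of arcs from the root to $v$; for leaves $i,j$, $\varphi_T(i,j)=\delta_T(LCA_T(i,j))$ ($LCA$ = lowest common ancestor), and $\Phi(T)=\sum_{1\le i<j\le n}\varphi_T(i,j)$ is the total cophenetic index. *)

theory Defs
  imports "HOL-Computational_Algebra.Computational_Algebra"
begin

text \<open>Rooted binary trees with leaves labeled by naturals. Every internal node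
  has exactly two children (the order of children is irrelevant for all
  quantities considered here).\<close>
datatype btree = Leaf nat | Node btree btree

fun leaves :: "btree \<Rightarrow> nat list" where
  "leaves (Leaf a) = [a]"
| "leaves (Node l r) = leaves l @ leaves r"

definition binary_phylo :: "btree \<Rightarrow> nat \<Rightarrow> bool" where
  "binary_phylo t n \<longleftrightarrow> distinct (leaves t) \<and> set (leaves t) = {1..n}"

fun lca_depth :: "btree \<Rightarrow> nat \<Rightarrow> nat \<Rightarrow> nat" where
  "lca_depth (Leaf a) i j = 0"
| "lca_depth (Node l r) i j =
     (if i \<in> set (leaves l) \<and> j \<in> set (leaves l) then Suc (lca_depth l i j)
      else if i \<in> set (leaves r) \<and> j \<in> set (leaves r) then Suc (lca_depth r i j)
      else 0)"

definition total_cophenetic :: "btree \<Rightarrow> nat \<Rightarrow> nat" where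
  "total_cophenetic t n = (\<Sum>(i, j) \<in> {(i, j). 1 \<le> i \<and> i < j \<and> j \<le> n}. lca_depth t i j)"

definition min_cophenetic :: "nat \<Rightarrow> nat" where
  "min_cophenetic n = Min {total_cophenetic t n | t. binary_phylo t n}"

definition two_adic_fact :: "nat \<Rightarrow> nat" where
  "two_adic_fact k = multiplicity (2::nat) (fact k)"

end

theory Submission
  imports Defs
begin

abbreviation a where "a \<equiv> two_adic_fact"

lemma a0: "a 0 = 0" by (simp add: two_adic_fact_def)

lemma aSuc: "a (Suc k) = a k + multiplicity 2 (Suc k)"
proof -
  have "fact (Suc k) = (Suc k) * (fact k :: nat)" by simp
  moreover have "prime_elem (2::nat)" by simp
  ultimately show ?thesis unfolding two_adic_fact_def
    using prime_elem_multiplicity_mult_distrib[of "2::nat" "Suc k" "fact k"]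
    by (simp add: fact_nonzero)
qed

lemma a_mono: "m \<le> k \<Longrightarrow> a m \<le> a k"
proof (induction k)
  case (Suc k) thus ?case using aSuc[of k] by (cases "m = Suc k") auto
qed simp

lemma a_half: "a (2*m) = m + a m \<and> a (2*m+1) = m + a m"
proof (induction m)
  case 0 thus ?case using aSuc[of 0] a0 by simp
next
  case (Suc m)
  have o: "multiplicity (2::nat) (Suc (2*m)) = 0"
    by (rule not_dvd_imp_multiplicity_0) presburger
  have e: "multiplicity (2::nat) (2 * Suc m) = Suc (multiplicity 2 (Suc m))"
    by (rule multiplicity_times_same) auto
  have 1: "a (2*Suc m) = Suc m + a (Suc m)"
    using aSuc[of "2*m+1"] aSuc[of "2*m"] aSuc[of m] Suc.IH o e
    by (simp add: mult_2)
  moreover have "a (2*Suc m+1) = Suc m + a (Suc m)"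
  proof -
    have o2: "multiplicity (2::nat) (Suc (2*Suc m)) = 0"
      by (rule not_dvd_imp_multiplicity_0) presburger
    show ?thesis using aSuc[of "2*Suc m"] o2 1 by simp
  qed
  ultimately show ?case by simp
qed

definition G :: "nat \<Rightarrow> nat" where "G n = (\<Sum>k<n. a k)"
definition h :: "nat \<Rightarrow> nat" where "h p = G p + (p choose 2)"

lemma h_step: "h (Suc m) = h m + a m + m"
proof -
  have c: "(Suc m choose 2) = (m choose 2) + m"
    using binomial_Suc_Suc[where n=m and k=1] by (simp only: Suc_1 choose_one add.commute)
  have g: "G (Suc m) = G m + a m" by (simp add: G_def)
  show ?thesis unfolding h_def c g by simp
qed

lemma G_rec: "G n = h ((n+1) div 2) + h (n div 2)"
proof (induction n)
  case 0 thus ?case by (simp add: G_def h_def)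
next
  case (Suc n)
  have GS: "G (Suc n) = G n + a n" by (simp add: G_def)
  show ?case
  proof (cases "even n")
    case True then obtain m where m: "n = 2*m" by blast
    have "(Suc n + 1) div 2 = Suc m" "Suc n div 2 = m" "(n+1) div 2 = m" "n div 2 = m" using m by auto
    thus ?thesis using Suc.IH GS h_step[of m] a_half[of m] m by simp
  next
    case False then obtain m where m: "n = 2*m+1" using oddE by blast
    have "(Suc n + 1) div 2 = Suc m" "Suc n div 2 = Suc m" "(n+1) div 2 = Suc m" "n div 2 = m" using m by auto
    thus ?thesis using Suc.IH GS h_step[of m] a_half[of m] m by simp
  qed
qed

lemma convex_aux: "q + d = p \<Longrightarrow> h p + h q \<ge> h ((p+q+1) div 2) + h ((p+q) div 2)"
proof (induction d arbitrary: p q rule: less_induct)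
  case (less d)
  show ?case
  proof (cases "d \<le> 1")
    case True
    then consider "d = 0" | "d = 1" by linarith
    thus ?thesis using less.prems by cases (auto simp: add.commute)
  next
    case False
    define p' where "p' = p - 1"
    have p: "p = Suc p'" using False less.prems p'_def by auto
    have "h (Suc q) + h p' \<le> h p + h q"
      using h_step[of p'] h_step[of q] a_mono[of q p'] False less.prems p by auto
    moreover have "h ((p' + Suc q + 1) div 2) + h ((p' + Suc q) div 2) \<le> h p' + h (Suc q)"
      using less.IH[of "d - 2" "Suc q" p'] False less.prems p by auto
    moreover have "p' + Suc q = p + q" using p by simp
    ultimately show ?thesis by (metis add.commute order_trans)
  qed
qed

lemma convex: "h p + h q \<ge> h ((p+q+1) div 2) + h ((p+q) div 2)"
proof (cases "q \<le> p")
  case True thus ?thesis using convex_aux[of q "p-q" p] by simp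
next
  case False thus ?thesis using convex_aux[of p "q-p" q] by (simp add: add.commute)
qed

definition P :: "nat set \<Rightarrow> (nat \<times> nat) set" where
  "P S = {(i,j). i \<in> S \<and> j \<in> S \<and> i < j}"

lemma P_finite: "finite S \<Longrightarrow> finite (P S)"
  by (rule finite_subset[of _ "S \<times> S"]) (auto simp: P_def)

lemma card_P: assumes "finite S" shows "card (P S) = card S choose 2"
proof -
  have "bij_betw (\<lambda>(i,j). {i,j}) (P S) {A. A \<subseteq> S \<and> card A = 2}"
  proof (rule bij_betwI')
    fix x y assume "x \<in> P S" "y \<in> P S"
    thus "((case x of (i, j) \<Rightarrow> {i, j}) = (case y of (i, j) \<Rightarrow> {i, j})) = (x = y)"
      by (auto simp: P_def doubleton_eq_iff)
  next
    fix x assume "x \<in> P S"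
    thus "(case x of (i, j) \<Rightarrow> {i, j}) \<in> {A. A \<subseteq> S \<and> card A = 2}"
      by (auto simp: P_def)
  next
    fix A assume "A \<in> {A. A \<subseteq> S \<and> card A = 2}"
    then obtain x y where A: "A = {x,y}" "x \<noteq> y" "x \<in> S" "y \<in> S"
      by (auto simp: card_2_iff)
    show "\<exists>z\<in>P S. A = (case z of (i, j) \<Rightarrow> {i, j})"
    proof (cases "x < y")
      case True thus ?thesis using A by (intro bexI[of _ "(x,y)"]) (auto simp: P_def)
    next
      case False thus ?thesis using A by (intro bexI[of _ "(y,x)"]) (auto simp: P_def)
    qed
  qed
  hence "card (P S) = card {A. A \<subseteq> S \<and> card A = 2}" by (rule bij_betw_same_card)
  thus ?thesis using n_subsets[OF assms] by simp
qed

definition cph :: "btree \<Rightarrow> nat" where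
  "cph t = (\<Sum>(i,j) \<in> P (set (leaves t)). lca_depth t i j)"

lemma cph_Node:
  assumes "distinct (leaves (Node l r))"
  shows "cph (Node l r) = cph l + cph r + (length (leaves l) choose 2) + (length (leaves r) choose 2)"
proof -
  let ?L = "set (leaves l)" and ?R = "set (leaves r)"
  let ?f = "\<lambda>(i,j). lca_depth (Node l r) i j"
  have dis: "?L \<inter> ?R = {}" and dl: "distinct (leaves l)" and dr: "distinct (leaves r)"
    using assms by auto
  have fin: "finite (P ?L)" "finite (P ?R)" "finite (P (?L \<union> ?R))" by (auto intro: P_finite)
  have "cph (Node l r) = sum ?f (P (?L \<union> ?R))" by (simp add: cph_def)
  also have "\<dots> = sum ?f (P ?L \<union> P ?R)"
    by (rule sum.mono_neutral_right) (use fin dis in \<open>auto simp: P_def\<close>)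
  also have "\<dots> = sum ?f (P ?L) + sum ?f (P ?R)"
    by (rule sum.union_disjoint) (use fin dis in \<open>auto simp: P_def\<close>)
  also have "sum ?f (P ?L) = sum (\<lambda>(i,j). Suc (lca_depth l i j)) (P ?L)"
    by (rule sum.cong) (auto simp: P_def)
  also have "\<dots> = cph l + card (P ?L)"
    by (simp add: cph_def sum_Suc split_def)
  also have "sum ?f (P ?R) = sum (\<lambda>(i,j). Suc (lca_depth r i j)) (P ?R)"
    by (rule sum.cong) (use dis in \<open>auto simp: P_def\<close>)
  also have "\<dots> = cph r + card (P ?R)"
    by (simp add: cph_def sum_Suc split_def)
  finally show ?thesis using card_P[of ?L] card_P[of ?R] distinct_card[OF dl] distinct_card[OF dr]
    by simp
qed

lemma lower: "distinct (leaves t) \<Longrightarrow> cph t \<ge> G (length (leaves t))"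
proof (induction t)
  case (Leaf x) thus ?case by (simp add: G_def a0)
next
  case (Node l r)
  let ?p = "length (leaves l)" and ?q = "length (leaves r)"
  have "G (length (leaves (Node l r))) = h ((?p + ?q + 1) div 2) + h ((?p + ?q) div 2)"
    using G_rec[of "?p + ?q"] by simp
  also have "\<dots> \<le> h ?p + h ?q" by (rule convex)
  also have "\<dots> \<le> cph (Node l r)"
    using Node cph_Node[OF Node.prems] by (auto simp: h_def)
  finally show ?case .
qed

function bal :: "nat \<Rightarrow> nat \<Rightarrow> btree" where
  "bal s n = (if n \<le> 1 then Leaf s else Node (bal s ((n+1) div 2)) (bal (s + (n+1) div 2) (n div 2)))"
  by pat_completeness auto
termination by (relation "measure snd") auto

declare bal.simps[simp del]

lemma bal_leaves: "n \<ge> 1 \<Longrightarrow> leaves (bal s n) = [s..<s+n]"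
proof (induction s n rule: bal.induct)
  case (1 s n)
  show ?case
  proof (cases "n \<le> 1")
    case True hence "n = 1" using 1 by simp
    thus ?thesis by (simp add: bal.simps)
  next
    case False
    have "leaves (bal s n) = [s..<s + (n+1) div 2] @ [s + (n+1) div 2..<s + (n+1) div 2 + n div 2]"
      using 1 False by (subst bal.simps) simp
    also have "\<dots> = [s..<s+n]"
    proof -
      have "(n+1) div 2 + n div 2 = n" by arith
      thus ?thesis using upt_add_eq_append[of s "s + (n+1) div 2" "n div 2"] by (simp add: add.assoc)
    qed
    finally show ?thesis .
  qed
qed

lemma bal_cph: "n \<ge> 1 \<Longrightarrow> cph (bal s n) = G n"
proof (induction s n rule: bal.induct)
  case (1 s n)
  show ?case
  proof (cases "n \<le> 1")
    case True hence "n = 1" using 1 by simp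
    thus ?thesis by (simp add: bal.simps cph_def P_def G_def a0)
  next
    case False
    have eq: "bal s n = Node (bal s ((n+1) div 2)) (bal (s + (n+1) div 2) (n div 2))"
      using False by (subst bal.simps) simp
    have d: "distinct (leaves (bal s n))" using bal_leaves[OF "1.prems"] by simp
    have l1: "length (leaves (bal s ((n+1) div 2))) = (n+1) div 2"
      using False bal_leaves[of "(n+1) div 2" s] by simp
    have l2: "length (leaves (bal (s + (n+1) div 2) (n div 2))) = n div 2"
      using False bal_leaves[of "n div 2" "s + (n+1) div 2"] by simp
    have i1: "cph (bal s ((n+1) div 2)) = G ((n+1) div 2)" using 1(1)[OF False] False by simp
    have i2: "cph (bal (s + (n+1) div 2) (n div 2)) = G (n div 2)" using 1(2)[OF False] False by simp
    have "cph (bal s n) = h ((n+1) div 2) + h (n div 2)"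
      using cph_Node[of "bal s ((n+1) div 2)" "bal (s + (n+1) div 2) (n div 2)"] d
      unfolding eq using l1 l2 i1 i2 by (simp add: h_def)
    thus ?thesis using G_rec[of n] by simp
  qed
qed

lemma leaves_ne: "leaves t \<noteq> []" by (induction t) auto

lemma lca_lt: "lca_depth t i j < length (leaves t)"
proof (induction t)
  case (Node l r)
  have "length (leaves l) > 0" "length (leaves r) > 0" using leaves_ne[of l] leaves_ne[of r] by auto
  thus ?case using Node.IH by simp
qed simp

lemma P_eq: "binary_phylo t n \<Longrightarrow> P (set (leaves t)) = {(i, j). 1 \<le> i \<and> i < j \<and> j \<le> n}"
  unfolding binary_phylo_def P_def by auto

lemma tc_cph: "binary_phylo t n \<Longrightarrow> total_cophenetic t n = cph t"
  unfolding total_cophenetic_def cph_def by (simp only: P_eq)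

lemma len_n: "binary_phylo t n \<Longrightarrow> length (leaves t) = n"
proof -
  assume b: "binary_phylo t n"
  hence "card (set (leaves t)) = card {1..n}" by (simp add: binary_phylo_def)
  hence c: "card (set (leaves t)) = n" by simp
  have d: "distinct (leaves t)" using b by (simp add: binary_phylo_def)
  have "card (set (leaves t)) = length (leaves t)" by (rule distinct_card[OF d])
  thus ?thesis using c by simp
qed

lemma tc_bound: assumes b: "binary_phylo t n" shows "total_cophenetic t n \<le> n*n*n"
proof -
  let ?I = "{(i, j). 1 \<le> i \<and> i < j \<and> j \<le> n}"
  have sub: "?I \<subseteq> {1..n} \<times> {1..n}" by auto
  have cI: "card ?I \<le> n * n"
    using card_mono[OF _ sub] by simp
  have bd: "\<And>x. x \<in> ?I \<Longrightarrow> (case x of (i,j) \<Rightarrow> lca_depth t i j) \<le> n"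
  proof -
    fix x show "(case x of (i,j) \<Rightarrow> lca_depth t i j) \<le> n"
      using lca_lt[of t "fst x" "snd x"] len_n[OF b] by (cases x) simp
  qed
  have "total_cophenetic t n \<le> card ?I * n"
    unfolding total_cophenetic_def
    using sum_bounded_above[of ?I "\<lambda>(i,j). lca_depth t i j" n, OF bd] by simp
  also have "\<dots> \<le> n*n*n" using cI by simp
  finally show ?thesis .
qed

theorem mainTheorem12:
  fixes n :: nat
  assumes "n \<ge> 1"
  shows "min_cophenetic n = (\<Sum>k = 0..n-1. two_adic_fact k)"
proof -
  let ?S = "{total_cophenetic t n | t. binary_phylo t n}"
  have "{0..n-1} = {..<n}" using assms by auto
  hence Gn: "(\<Sum>k = 0..n-1. two_adic_fact k) = G n"
    unfolding G_def by simp
  have "set [1..<1+n] = {1..n}" by auto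
  hence bp: "binary_phylo (bal 1 n) n"
    using bal_leaves[OF assms, of 1] by (simp add: binary_phylo_def)
  have "total_cophenetic (bal 1 n) n = G n"
    using tc_cph[OF bp] bal_cph[OF assms] by simp
  hence "\<exists>t. G n = total_cophenetic t n \<and> binary_phylo t n" using bp by metis
  hence mem: "G n \<in> ?S" by simp
  have lo: "y \<ge> G n" if yin: "y \<in> ?S" for y
  proof -
    obtain t where t: "y = total_cophenetic t n" "binary_phylo t n" using yin by blast
    have "distinct (leaves t)" using t(2) by (simp add: binary_phylo_def)
    hence "G (length (leaves t)) \<le> cph t" by (rule lower)
    thus ?thesis using len_n[OF t(2)] tc_cph[OF t(2)] t(1) by simp
  qed
  have fin: "finite ?S"
  proof (rule finite_subset[of _ "{..n*n*n}"])
    show "?S \<subseteq> {..n*n*n}" using tc_bound by auto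
  qed simp
  show ?thesis unfolding min_cophenetic_def Gn
    by (rule Min_eqI[OF fin lo mem])
qed

end
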